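(* Let $t\ge3$ be an integer. Every $t$-villa is $(2P_3,C_4,C_6,C_7,T_0)$-free and contains an induced $t$-pentagon. Moreover, every $t$-villa is anticonnected and contains no simplicial and no universal vertices.
   Context: Graphs are finite, simple, nonnull. A graph is $(H_1,\dots,H_m)$-free if it has no induced subgraph isomorphic to any $H_i$. $P_k$, $C_k$ are the path and cycle on $k$ vertices; $2P_3$ is two disjoint copies of $P_3$. $T_0$ is the graph with vertices $p,q,u_0,u_1,u_2,u_3,w_1,w_2,w_3$ and edges $pq,pu_0,pu_2,pu_3,qu_1,qu_2,qu_3,u_0w_1,u_1w_1,u_2w_2,u_3w_3,w_1w_2,w_1w_3,w_2w_3$. For $t\ge3$ the $t$-pentagon is the graph on vertices $a,b_1,\dots,b_t,c_1,\dots,c_t$ where $a$ is adjacent to every $b_i$ and to no $c_i$, $\{b_1,\dots,b_t\}$ is stable, $\{c_1,\dots,c_t\}$ is a clique, and $b_ic_j$ is an edge iff $i=j$. A graph is anticonnected if its complement is connected. A vertex is simplicial if its neighbours form a (possibly empty) clique, universal if adjacent to all other vertices. For disjoint vertex sets $X,Y$, $X$ is complete (anticomplete) to $Y$ if every vertex of $X$ is adjacent (nonadjacent) to every vertex of $Y$. A $t$-villa is a graph $Q$ whose vertex set partitions into nonempty cliques $A,B_1,\dots,B_t,C_1,\dots,C_t$ such that $A$ is complete to $B_1\cup\dots\cup B_t$ and anticomplete to $C_1\cup\dots\cup C_t$; the $B_i$ are pairwise anticomplete; the $C_i$ are pairwise complete; $B_i$ is anticomplete to $C_j$ for $i\ne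 j$; and each $B_i$ can be ordered $b^i_1,\dots,b^i_{r_i}$ with $\emptyset\ne N(b^i_{r_i})\cap C_i\subseteq\dots\subseteq N(b^i_1)\cap C_i=C_i$. *)

theory Defs
  imports Main
begin

text \<open>A finite simple nonnull graph: vertex set V, adjacency relation E
  (only its restriction to V matters), symmetric and irreflexive on V.\<close>
definition graph :: "'a set \<Rightarrow> ('a \<Rightarrow> 'a \<Rightarrow> bool) \<Rightarrow> bool" where
  "graph V E \<longleftrightarrow> finite V \<and> V \<noteq> {} \<and>
     (\<forall>x\<in>V. \<forall>y\<in>V. E x y \<longleftrightarrow> E y x) \<and> (\<forall>x\<in>V. \<not> E x x)"

definition has_induced :: "'a set \<Rightarrow> ('a \<Rightarrow> 'a \<Rightarrow> bool) \<Rightarrow> 'b set \<Rightarrow> ('b \<Rightarrow> 'b \<Rightarrow> bool) \<Rightarrow> bool" where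
  "has_induced V E W F \<longleftrightarrow> (\<exists>f. inj_on f W \<and> f ` W \<subseteq> V \<and>
     (\<forall>x\<in>W. \<forall>y\<in>W. F x y \<longleftrightarrow> E (f x) (f y)))"

definition neighbours :: "'a set \<Rightarrow> ('a \<Rightarrow> 'a \<Rightarrow> bool) \<Rightarrow> 'a \<Rightarrow> 'a set" where
  "neighbours V E v = {u\<in>V. E v u}"

definition clique :: "('a \<Rightarrow> 'a \<Rightarrow> bool) \<Rightarrow> 'a set \<Rightarrow> bool" where
  "clique E X \<longleftrightarrow> (\<forall>x\<in>X. \<forall>y\<in>X. x \<noteq> y \<longrightarrow> E x y)"

definition complete_to :: "('a \<Rightarrow> 'a \<Rightarrow> bool) \<Rightarrow> 'a set \<Rightarrow> 'a set \<Rightarrow> bool" where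
  "complete_to E X Y \<longleftrightarrow> (\<forall>x\<in>X. \<forall>y\<in>Y. E x y)"

definition anticomplete_to :: "('a \<Rightarrow> 'a \<Rightarrow> bool) \<Rightarrow> 'a set \<Rightarrow> 'a set \<Rightarrow> bool" where
  "anticomplete_to E X Y \<longleftrightarrow> (\<forall>x\<in>X. \<forall>y\<in>Y. \<not> E x y)"

definition simplicial :: "'a set \<Rightarrow> ('a \<Rightarrow> 'a \<Rightarrow> bool) \<Rightarrow> 'a \<Rightarrow> bool" where
  "simplicial V E v \<longleftrightarrow> clique E (neighbours V E v)"

definition universal :: "'a set \<Rightarrow> ('a \<Rightarrow> 'a \<Rightarrow> bool) \<Rightarrow> 'a \<Rightarrow> bool" where
  "universal V E v \<longleftrightarrow> (\<forall>u\<in>V. u \<noteq> v \<longrightarrow> E v u)"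

definition graph_connected :: "'a set \<Rightarrow> ('a \<Rightarrow> 'a \<Rightarrow> bool) \<Rightarrow> bool" where
  "graph_connected V E \<longleftrightarrow>
     (\<forall>x\<in>V. \<forall>y\<in>V. (\<lambda>u v. u \<in> V \<and> v \<in> V \<and> E u v)\<^sup>*\<^sup>* x y)"

definition complement :: "('a \<Rightarrow> 'a \<Rightarrow> bool) \<Rightarrow> 'a \<Rightarrow> 'a \<Rightarrow> bool" where
  "complement E x y \<longleftrightarrow> x \<noteq> y \<and> \<not> E x y"

definition anticonnected :: "'a set \<Rightarrow> ('a \<Rightarrow> 'a \<Rightarrow> bool) \<Rightarrow> bool" where
  "anticonnected V E \<longleftrightarrow> graph_connected V (complement E)"

definition edges_adj :: "(nat \<times> nat) list \<Rightarrow> nat \<Rightarrow> nat \<Rightarrow> bool" where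
  "edges_adj es x y \<longleftrightarrow> (x, y) \<in> set es \<or> (y, x) \<in> set es"

definition P3_V :: "nat set" where "P3_V = {0..<3}"
definition P3_E :: "nat \<Rightarrow> nat \<Rightarrow> bool" where "P3_E = edges_adj [(0,1),(1,2)]"

definition twoP3_V :: "nat set" where "twoP3_V = {0..<6}"
definition twoP3_E :: "nat \<Rightarrow> nat \<Rightarrow> bool" where
  "twoP3_E = edges_adj [(0,1),(1,2),(3,4),(4,5)]"

definition cycle_V :: "nat \<Rightarrow> nat set" where "cycle_V k = {0..<k}"
definition cycle_E :: "nat \<Rightarrow> nat \<Rightarrow> nat \<Rightarrow> bool" where
  "cycle_E k i j \<longleftrightarrow> j = (i + 1) mod k \<or> i = (j + 1) mod k"

text \<open>T0 with p=0, q=1, u0=2, u1=3, u2=4, u3=5, w1=6, w2=7, w3=8.\<close>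
definition T0_V :: "nat set" where "T0_V = {0..<9}"
definition T0_E :: "nat \<Rightarrow> nat \<Rightarrow> bool" where
  "T0_E = edges_adj [(0,1),(0,2),(0,4),(0,5),(1,3),(1,4),(1,5),
                     (2,6),(3,6),(4,7),(5,8),(6,7),(6,8),(7,8)]"

datatype pent_vertex = PA | PB nat | PC nat

definition pentagon_V :: "nat \<Rightarrow> pent_vertex set" where
  "pentagon_V t = {PA} \<union> PB ` {1..t} \<union> PC ` {1..t}"

fun pentagon_E :: "pent_vertex \<Rightarrow> pent_vertex \<Rightarrow> bool" where
  "pentagon_E PA (PB i) = True"
| "pentagon_E (PB i) PA = True"
| "pentagon_E (PC i) (PC j) = (i \<noteq> j)"
| "pentagon_E (PB i) (PC j) = (i = j)"
| "pentagon_E (PC i) (PB j) = (i = j)"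
| "pentagon_E _ _ = False"

definition villa :: "nat \<Rightarrow> 'a set \<Rightarrow> ('a \<Rightarrow> 'a \<Rightarrow> bool) \<Rightarrow> bool" where
  "villa t V E \<longleftrightarrow> graph V E \<and>
    (\<exists>A B C.
      \<comment> \<open>partition of V into nonempty cliques\<close>
      V = A \<union> (\<Union>i\<in>{1..t}. B i) \<union> (\<Union>i\<in>{1..t}. C i) \<and>
      A \<noteq> {} \<and> (\<forall>i\<in>{1..t}. B i \<noteq> {} \<and> C i \<noteq> {}) \<and>
      (\<forall>i\<in>{1..t}. A \<inter> B i = {} \<and> A \<inter> C i = {}) \<and>
      (\<forall>i\<in>{1..t}. \<forall>j\<in>{1..t}. B i \<inter> C j = {}) \<and>
      (\<forall>i\<in>{1..t}. \<forall>j\<in>{1..t}. i \<noteq> j \<longrightarrow> B i \<inter> B j = {} \<and> C i \<inter> C j = {}) \<and>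
      clique E A \<and> (\<forall>i\<in>{1..t}. clique E (B i) \<and> clique E (C i)) \<and>
      \<comment> \<open>adjacency conditions\<close>
      (\<forall>i\<in>{1..t}. complete_to E A (B i) \<and> anticomplete_to E A (C i)) \<and>
      (\<forall>i\<in>{1..t}. \<forall>j\<in>{1..t}. i \<noteq> j \<longrightarrow>
          anticomplete_to E (B i) (B j) \<and> complete_to E (C i) (C j) \<and>
          anticomplete_to E (B i) (C j)) \<and>
      \<comment> \<open>nested neighbourhoods ordering of each B i\<close>
      (\<forall>i\<in>{1..t}. \<exists>bs. distinct bs \<and> set bs = B i \<and>
          neighbours V E (bs ! 0) \<inter> C i = C i \<and>
          neighbours V E (last bs) \<inter> C i \<noteq> {} \<and>
          (\<forall>j k. j \<le> k \<and> k < length bs \<longrightarrow>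
              neighbours V E (bs ! k) \<inter> C i \<subseteq> neighbours V E (bs ! j) \<inter> C i)))"

end

theory Submission
  imports Defs
begin


datatype kind = KA | KB | KC

locale vs =
  fixes V :: "'a set" and E :: "'a \<Rightarrow> 'a \<Rightarrow> bool" and kd :: "'a \<Rightarrow> kind" and idx :: "'a \<Rightarrow> nat"
  assumes sym: "x\<in>V \<Longrightarrow> y\<in>V \<Longrightarrow> E x y \<Longrightarrow> E y x"
  and irr: "x\<in>V \<Longrightarrow> \<not> E x x"
  and AA: "x\<in>V \<Longrightarrow> y\<in>V \<Longrightarrow> x\<noteq>y \<Longrightarrow> kd x = KA \<Longrightarrow> kd y = KA \<Longrightarrow> E x y"
  and AB: "x\<in>V \<Longrightarrow> y\<in>V \<Longrightarrow> kd x = KA \<Longrightarrow> kd y = KB \<Longrightarrow> E x y"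
  and AC: "x\<in>V \<Longrightarrow> y\<in>V \<Longrightarrow> kd x = KA \<Longrightarrow> kd y = KC \<Longrightarrow> \<not> E x y"
  and BB: "x\<in>V \<Longrightarrow> y\<in>V \<Longrightarrow> x\<noteq>y \<Longrightarrow> kd x = KB \<Longrightarrow> kd y = KB \<Longrightarrow> E x y \<longleftrightarrow> idx x = idx y"
  and CC: "x\<in>V \<Longrightarrow> y\<in>V \<Longrightarrow> x\<noteq>y \<Longrightarrow> kd x = KC \<Longrightarrow> kd y = KC \<Longrightarrow> E x y"
  and BC: "x\<in>V \<Longrightarrow> y\<in>V \<Longrightarrow> kd x = KB \<Longrightarrow> kd y = KC \<Longrightarrow> E x y \<Longrightarrow> idx x = idx y"
  and K2: "b\<in>V \<Longrightarrow> b'\<in>V \<Longrightarrow> c\<in>V \<Longrightarrow> c'\<in>V \<Longrightarrow> kd b = KB \<Longrightarrow> kd b' = KB \<Longrightarrow>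
     kd c = KC \<Longrightarrow> kd c' = KC \<Longrightarrow> idx b = idx c \<Longrightarrow> idx b' = idx c \<Longrightarrow> idx c' = idx c \<Longrightarrow>
     E b c \<Longrightarrow> E b' c' \<Longrightarrow> \<not> E b c' \<Longrightarrow> \<not> E b' c \<Longrightarrow> False"
begin

lemma NA: "a\<in>V \<Longrightarrow> y\<in>V \<Longrightarrow> a\<noteq>y \<Longrightarrow> kd a = KA \<Longrightarrow> \<not> E a y \<Longrightarrow> kd y = KC"
  by (cases "kd y") (auto dest: AA AB)

lemma NA': "a\<in>V \<Longrightarrow> y\<in>V \<Longrightarrow> a\<noteq>y \<Longrightarrow> kd a = KA \<Longrightarrow> \<not> E y a \<Longrightarrow> kd y = KC"
  using NA sym by blast

lemma BBB: "x\<in>V \<Longrightarrow> y\<in>V \<Longrightarrow> z\<in>V \<Longrightarrow> x\<noteq>y \<Longrightarrow> y\<noteq>z \<Longrightarrow> x\<noteq>z \<Longrightarrow> kd x = KB \<Longrightarrow> kd y = KB \<Longrightarrow> kd z = KB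
   \<Longrightarrow> E x y \<Longrightarrow> E y z \<Longrightarrow> E x z"
  using BB by metis

lemma BCi: "x\<in>V \<Longrightarrow> y\<in>V \<Longrightarrow> kd x = KB \<Longrightarrow> kd y = KC \<Longrightarrow> E y x \<Longrightarrow> idx x = idx y"
  using BC sym by blast

abbreviation "ind4 x0 x1 x2 x3 \<equiv> x0\<in>V \<and> x1\<in>V \<and> x2\<in>V \<and> x3\<in>V \<and>
   E x0 x1 \<and> E x1 x2 \<and> E x2 x3 \<and> E x3 x0 \<and> \<not> E x0 x2 \<and> \<not> E x1 x3 \<and> x0 \<noteq> x2 \<and> x1 \<noteq> x3"

lemma ind4_rot: "ind4 x0 x1 x2 x3 \<Longrightarrow> ind4 x1 x2 x3 x0" using sym by blast
lemma ind4_rev: "ind4 x0 x1 x2 x3 \<Longrightarrow> ind4 x3 x2 x1 x0" using sym by blast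

lemma C4A: "ind4 x0 x1 x2 x3 \<Longrightarrow> kd x0 = KA \<Longrightarrow> False"
proof -
  assume h: "ind4 x0 x1 x2 x3" and a: "kd x0 = KA"
  have "kd x2 = KC" using NA h a by metis
  have "kd x1 = KB" using AC a \<open>kd x2 = KC\<close> h sym by (cases "kd x1") (auto dest: AC)
  have "kd x3 = KB" using AC a \<open>kd x2 = KC\<close> h sym by (cases "kd x3") (auto dest: AC)
  have "idx x1 = idx x2" using BC h \<open>kd x1 = KB\<close> \<open>kd x2 = KC\<close> by blast
  have "idx x3 = idx x2" using BC h \<open>kd x3 = KB\<close> \<open>kd x2 = KC\<close> sym by blast
  show False using BB[of x1 x3] h \<open>kd x1 = KB\<close> \<open>kd x3 = KB\<close> \<open>idx x1 = idx x2\<close> \<open>idx x3 = idx x2\<close> by auto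
qed

lemma C4core: "ind4 x0 x1 x2 x3 \<Longrightarrow> kd x0 = KC \<Longrightarrow> kd x1 = KC \<Longrightarrow> kd x2 = KB \<Longrightarrow> kd x3 = KB \<Longrightarrow> False"
proof -
  assume h: "ind4 x0 x1 x2 x3" and k: "kd x0 = KC" "kd x1 = KC" "kd x2 = KB" "kd x3 = KB"
  have i1: "idx x2 = idx x1" using BCi h k by blast
  have i2: "idx x3 = idx x0" using BC h k by blast
  have i3: "idx x2 = idx x3" using BB[of x2 x3] h k by auto
  show False using K2[of x2 x3 x1 x0] h k i1 i2 i3 sym by metis
qed

lemma noC4: "ind4 x0 x1 x2 x3 \<Longrightarrow> False"
proof -
  assume h: "ind4 x0 x1 x2 x3"
  note r1 = ind4_rot[OF h]
  note r2 = ind4_rot[OF r1]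
  note r3 = ind4_rot[OF r2]
  note h1 = r1 r2 r3
  have d: "x0\<noteq>x1" "x0\<noteq>x2" "x0\<noteq>x3" "x1\<noteq>x2" "x1\<noteq>x3" "x2\<noteq>x3"
    using h sym irr by metis+
  have "kd x0 \<noteq> KA" "kd x1 \<noteq> KA" "kd x2 \<noteq> KA" "kd x3 \<noteq> KA"
    using C4A[OF h] C4A[OF r1] C4A[OF r2] C4A[OF r3] by blast+
  then have k: "kd x0 = KB \<or> kd x0 = KC" "kd x1 = KB \<or> kd x1 = KC" "kd x2 = KB \<or> kd x2 = KC" "kd x3 = KB \<or> kd x3 = KC"
    by (metis kind.exhaust)+
  have n02: "\<not> (kd x0 = KC \<and> kd x2 = KC)" using CC h d by blast
  have n13: "\<not> (kd x1 = KC \<and> kd x3 = KC)" using CC h d by blast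
  have nB: "\<not> (kd y0 = KB \<and> kd y1 = KB \<and> kd y2 = KB)" if "ind4 y0 y1 y2 y3" for y0 y1 y2 y3
    using BBB[of y0 y1 y2] that irr by blast
  note r = ind4_rev[OF h] ind4_rev[OF h1(1)] ind4_rev[OF h1(2)] ind4_rev[OF h1(3)]

  show False
    using k n02 n13 nB[OF h] nB[OF h1(1)] nB[OF h1(2)] nB[OF h1(3)]
       C4core[OF h] C4core[OF h1(1)] C4core[OF h1(2)] C4core[OF h1(3)]
       C4core[OF r(1)] C4core[OF r(2)] C4core[OF r(3)] C4core[OF r(4)]
    by (smt (verit) kind.distinct)
qed


lemma no2P3core:
  assumes V: "x0\<in>V" "x1\<in>V" "x2\<in>V" "x3\<in>V" "x4\<in>V" "x5\<in>V"
  and d: "x0\<noteq>x1" "x1\<noteq>x2" "x0\<noteq>x2" "x3\<noteq>x4" "x4\<noteq>x5" "x3\<noteq>x5"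
  and d2: "x0\<noteq>x3" "x0\<noteq>x4" "x0\<noteq>x5" "x1\<noteq>x3" "x1\<noteq>x4" "x1\<noteq>x5" "x2\<noteq>x3" "x2\<noteq>x4" "x2\<noteq>x5"
  and e: "E x0 x1" "E x1 x2" "E x3 x4" "E x4 x5" "\<not> E x0 x2" "\<not> E x3 x5"
  and n: "\<not> E x0 x3" "\<not> E x0 x4" "\<not> E x0 x5" "\<not> E x1 x3" "\<not> E x1 x4" "\<not> E x1 x5"
         "\<not> E x2 x3" "\<not> E x2 x4" "\<not> E x2 x5"
  shows False
proof -
  have n': "\<not> E x3 x0" "\<not> E x4 x0" "\<not> E x5 x0" "\<not> E x3 x1" "\<not> E x4 x1" "\<not> E x5 x1"
         "\<not> E x3 x2" "\<not> E x4 x2" "\<not> E x5 x2" using n V sym by blast+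
  have noA1: "kd y \<noteq> KA" if "y \<in> {x0,x1,x2}" for y
  proof
    assume a: "kd y = KA"
    have "kd x3 = KC" "kd x5 = KC" using NA[of y] that a n V d2 by auto
    then show False using CC[of x3 x5] e V d by auto
  qed
  have noA2: "kd y \<noteq> KA" if "y \<in> {x3,x4,x5}" for y
  proof
    assume a: "kd y = KA"
    have "kd x0 = KC" "kd x2 = KC" using NA[of y] that a n' V d2 by auto
    then show False using CC[of x0 x2] e V d by auto
  qed
  have c1: "\<exists>y\<in>{x0,x1,x2}. kd y = KC"
  proof (rule ccontr)
    assume "\<not> ?thesis"
    then have "kd x0 = KB" "kd x1 = KB" "kd x2 = KB" using noA1 by (metis insertCI kind.exhaust)+
    then show False using BBB[of x0 x1 x2] V d e by auto
  qed
  have c2: "\<exists>y\<in>{x3,x4,x5}. kd y = KC"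
  proof (rule ccontr)
    assume "\<not> ?thesis"
    then have "kd x3 = KB" "kd x4 = KB" "kd x5 = KB" using noA2 by (metis insertCI kind.exhaust)+
    then show False using BBB[of x3 x4 x5] V d e by auto
  qed
  from c1 c2 obtain y z where "y\<in>{x0,x1,x2}" "z\<in>{x3,x4,x5}" "kd y = KC" "kd z = KC" by blast
  then show False using CC[of y z] V n d2 by auto
qed

abbreviation "ind5 x0 x1 x2 x3 x4 \<equiv> x0\<in>V \<and> x1\<in>V \<and> x2\<in>V \<and> x3\<in>V \<and> x4\<in>V \<and>
   E x0 x1 \<and> E x1 x2 \<and> E x2 x3 \<and> E x3 x4 \<and> E x4 x0 \<and>
   \<not> E x0 x2 \<and> \<not> E x0 x3 \<and> \<not> E x1 x3 \<and> \<not> E x1 x4 \<and> \<not> E x2 x4 \<and>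
   x0 \<noteq> x2 \<and> x0 \<noteq> x3 \<and> x1 \<noteq> x3 \<and> x1 \<noteq> x4 \<and> x2 \<noteq> x4"

abbreviation "pat x0 x1 x2 x3 x4 \<equiv> kd x0 = KA \<and> kd x1 = KB \<and> kd x2 = KC \<and> kd x3 = KC \<and> kd x4 = KB \<and>
   idx x1 = idx x2 \<and> idx x4 = idx x3 \<and> idx x1 \<noteq> idx x4"

lemma ind5_rot: "ind5 x0 x1 x2 x3 x4 \<Longrightarrow> ind5 x1 x2 x3 x4 x0" using sym by blast

lemma C5A: "ind5 x0 x1 x2 x3 x4 \<Longrightarrow> kd x0 = KA \<Longrightarrow> pat x0 x1 x2 x3 x4"
proof -
  assume h: "ind5 x0 x1 x2 x3 x4" and a: "kd x0 = KA"
  have c: "kd x2 = KC" "kd x3 = KC" using NA h a by metis+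
  have "kd x1 = KB" using AC a c h sym by (cases "kd x1") (auto dest: AC)
  moreover have "kd x4 = KB" using AC a c h sym by (cases "kd x4") (auto dest: AC)
  moreover have "idx x1 = idx x2" using BC h \<open>kd x1 = KB\<close> c by blast
  moreover have "idx x4 = idx x3" using BC h \<open>kd x4 = KB\<close> c sym by blast
  moreover have "idx x1 \<noteq> idx x4" using BB[of x1 x4] h \<open>kd x1 = KB\<close> \<open>kd x4 = KB\<close> by auto
  ultimately show ?thesis using a c by auto
qed

lemma C5someA: "ind5 x0 x1 x2 x3 x4 \<Longrightarrow> kd x0 = KA \<or> kd x1 = KA \<or> kd x2 = KA \<or> kd x3 = KA \<or> kd x4 = KA"
proof (rule ccontr)
  assume h: "ind5 x0 x1 x2 x3 x4" and "\<not> ?thesis"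
  then have k: "kd x0 = KB \<or> kd x0 = KC" "kd x1 = KB \<or> kd x1 = KC" "kd x2 = KB \<or> kd x2 = KC"
     "kd x3 = KB \<or> kd x3 = KC" "kd x4 = KB \<or> kd x4 = KC"
    by (metis kind.exhaust)+
  have d: "x0\<noteq>x1" "x1\<noteq>x2" "x2\<noteq>x3" "x3\<noteq>x4" "x4\<noteq>x0" using h irr by metis+
  have nc: "\<not> (kd y = KC \<and> kd z = KC)" if "y \<in> V" "z\<in>V" "y\<noteq>z" "\<not> E y z" for y z
    using CC that by blast
  have nb: "\<not> (kd y = KB \<and> kd z = KB \<and> kd w = KB)" if "y \<in> V" "z\<in>V" "w\<in>V" "y\<noteq>z" "z\<noteq>w" "y\<noteq>w"
     "E y z" "E z w" "\<not> E y w" for y z w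
    using BBB that by blast
  show False
    using k nc[of x0 x2] nc[of x0 x3] nc[of x1 x3] nc[of x1 x4] nc[of x2 x4]
      nb[of x0 x1 x2] nb[of x1 x2 x3] nb[of x2 x3 x4] nb[of x3 x4 x0] nb[of x4 x0 x1] h d sym
    by (smt (verit) kind.distinct)
qed

lemma C5: "ind5 x0 x1 x2 x3 x4 \<Longrightarrow> pat x0 x1 x2 x3 x4 \<or> pat x1 x2 x3 x4 x0 \<or> pat x2 x3 x4 x0 x1 \<or>
   pat x3 x4 x0 x1 x2 \<or> pat x4 x0 x1 x2 x3"
proof -
  assume h: "ind5 x0 x1 x2 x3 x4"
  note r1 = ind5_rot[OF h]
  note r2 = ind5_rot[OF r1]
  note r3 = ind5_rot[OF r2]
  note r4 = ind5_rot[OF r3]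
  note h1 = r1 r2 r3 r4
  consider "kd x0 = KA" | "kd x1 = KA" | "kd x2 = KA" | "kd x3 = KA" | "kd x4 = KA" using C5someA[OF h] by blast
  then show ?thesis
  proof cases
    case 1 show ?thesis by (rule disjI1, rule C5A[OF h 1])
  next
    case 2 show ?thesis by (rule disjI2, rule disjI1, rule C5A[OF h1(1) 2])
  next
    case 3 show ?thesis by (rule disjI2, rule disjI2, rule disjI1, rule C5A[OF h1(2) 3])
  next
    case 4 show ?thesis by (rule disjI2, rule disjI2, rule disjI2, rule disjI1, rule C5A[OF h1(3) 4])
  next
    case 5 show ?thesis by (rule disjI2, rule disjI2, rule disjI2, rule disjI2, rule C5A[OF h1(4) 5])
  qed
qed


lemma noA_hole: "a\<in>V \<Longrightarrow> y\<in>V \<Longrightarrow> z\<in>V \<Longrightarrow> a\<noteq>y \<Longrightarrow> a\<noteq>z \<Longrightarrow> y\<noteq>z \<Longrightarrow>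
  \<not> E a y \<Longrightarrow> \<not> E a z \<Longrightarrow> \<not> E y z \<Longrightarrow> kd a = KA \<Longrightarrow> False"
  using NA CC by metis

lemma nc_hole: "y\<in>V \<Longrightarrow> z\<in>V \<Longrightarrow> y\<noteq>z \<Longrightarrow> \<not> E y z \<Longrightarrow> \<not> (kd y = KC \<and> kd z = KC)"
  using CC by blast

lemma nb_hole: "y\<in>V \<Longrightarrow> z\<in>V \<Longrightarrow> w\<in>V \<Longrightarrow> y\<noteq>z \<Longrightarrow> z\<noteq>w \<Longrightarrow> y\<noteq>w \<Longrightarrow>
  E y z \<Longrightarrow> E z w \<Longrightarrow> \<not> E y w \<Longrightarrow> \<not> (kd y = KB \<and> kd z = KB \<and> kd w = KB)"
  using BBB by blast

lemma noC6: "\<not> has_induced V E (cycle_V 6) (cycle_E 6)"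
proof
  assume "has_induced V E (cycle_V 6) (cycle_E 6)"
  then obtain f where inj: "inj_on f {0..<6}" and sub: "f ` {0..<6} \<subseteq> V"
    and iso: "\<forall>x\<in>{0..<6}. \<forall>y\<in>{0..<6}. (cycle_E 6) x y \<longleftrightarrow> E (f x) (f y)"
    unfolding has_induced_def cycle_V_def by auto
  have ed: "E (f i) (f j) = (cycle_E 6) i j" if "i<6" "j<6" for i j using iso that by auto
  have ne: "(f i = f j) = (i = j)" if "i<6" "j<6" for i j using inj that by (auto simp: inj_on_def)
  have inV: "f i \<in> V" if "i<6" for i using sub that by auto
  note S = ed ne inV cycle_E_def
  have nA: "kd (f i) = KB \<or> kd (f i) = KC" if "i<6" for i
  proof -
    have "i=0 \<or> i=1 \<or> i=2 \<or> i=3 \<or> i=4 \<or> i=5" using that by auto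
    then have "kd (f i) \<noteq> KA" using noA_hole[of "f 0" "f 2" "f 4"] noA_hole[of "f 1" "f 3" "f 5"] noA_hole[of "f 2" "f 4" "f 0"] noA_hole[of "f 3" "f 5" "f 1"] noA_hole[of "f 4" "f 0" "f 2"] noA_hole[of "f 5" "f 1" "f 3"] by (auto simp: S)
    then show ?thesis by (cases "kd (f i)") auto
  qed
  have c0: "\<not> (kd (f 0) = KC \<and> kd (f 2) = KC)" by (rule nc_hole) (simp_all add: S)
  have c1: "\<not> (kd (f 0) = KC \<and> kd (f 3) = KC)" by (rule nc_hole) (simp_all add: S)
  have c2: "\<not> (kd (f 0) = KC \<and> kd (f 4) = KC)" by (rule nc_hole) (simp_all add: S)
  have c3: "\<not> (kd (f 1) = KC \<and> kd (f 3) = KC)" by (rule nc_hole) (simp_all add: S)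
  have c4: "\<not> (kd (f 1) = KC \<and> kd (f 4) = KC)" by (rule nc_hole) (simp_all add: S)
  have c5: "\<not> (kd (f 1) = KC \<and> kd (f 5) = KC)" by (rule nc_hole) (simp_all add: S)
  have c6: "\<not> (kd (f 2) = KC \<and> kd (f 4) = KC)" by (rule nc_hole) (simp_all add: S)
  have c7: "\<not> (kd (f 2) = KC \<and> kd (f 5) = KC)" by (rule nc_hole) (simp_all add: S)
  have c8: "\<not> (kd (f 3) = KC \<and> kd (f 5) = KC)" by (rule nc_hole) (simp_all add: S)
  have b0: "\<not> (kd (f 0) = KB \<and> kd (f 1) = KB \<and> kd (f 2) = KB)" by (rule nb_hole) (simp_all add: S)
  have b1: "\<not> (kd (f 1) = KB \<and> kd (f 2) = KB \<and> kd (f 3) = KB)" by (rule nb_hole) (simp_all add: S)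
  have b2: "\<not> (kd (f 2) = KB \<and> kd (f 3) = KB \<and> kd (f 4) = KB)" by (rule nb_hole) (simp_all add: S)
  have b3: "\<not> (kd (f 3) = KB \<and> kd (f 4) = KB \<and> kd (f 5) = KB)" by (rule nb_hole) (simp_all add: S)
  have b4: "\<not> (kd (f 4) = KB \<and> kd (f 5) = KB \<and> kd (f 0) = KB)" by (rule nb_hole) (simp_all add: S)
  have b5: "\<not> (kd (f 5) = KB \<and> kd (f 0) = KB \<and> kd (f 1) = KB)" by (rule nb_hole) (simp_all add: S)
  have k0: "kd (f 0) = KB \<or> kd (f 0) = KC" using nA[of 0] by simp
  have k1: "kd (f 1) = KB \<or> kd (f 1) = KC" using nA[of 1] by simp
  have k2: "kd (f 2) = KB \<or> kd (f 2) = KC" using nA[of 2] by simp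
  have k3: "kd (f 3) = KB \<or> kd (f 3) = KC" using nA[of 3] by simp
  have k4: "kd (f 4) = KB \<or> kd (f 4) = KC" using nA[of 4] by simp
  have k5: "kd (f 5) = KB \<or> kd (f 5) = KC" using nA[of 5] by simp
  show False using k0 k1 k2 k3 k4 k5 c0 c1 c2 c3 c4 c5 c6 c7 c8 b0 b1 b2 b3 b4 b5 by (smt (verit) kind.distinct)
qed

lemma noC7: "\<not> has_induced V E (cycle_V 7) (cycle_E 7)"
proof
  assume "has_induced V E (cycle_V 7) (cycle_E 7)"
  then obtain f where inj: "inj_on f {0..<7}" and sub: "f ` {0..<7} \<subseteq> V"
    and iso: "\<forall>x\<in>{0..<7}. \<forall>y\<in>{0..<7}. (cycle_E 7) x y \<longleftrightarrow> E (f x) (f y)"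
    unfolding has_induced_def cycle_V_def by auto
  have ed: "E (f i) (f j) = (cycle_E 7) i j" if "i<7" "j<7" for i j using iso that by auto
  have ne: "(f i = f j) = (i = j)" if "i<7" "j<7" for i j using inj that by (auto simp: inj_on_def)
  have inV: "f i \<in> V" if "i<7" for i using sub that by auto
  note S = ed ne inV cycle_E_def
  have nA: "kd (f i) = KB \<or> kd (f i) = KC" if "i<7" for i
  proof -
    have "i=0 \<or> i=1 \<or> i=2 \<or> i=3 \<or> i=4 \<or> i=5 \<or> i=6" using that by auto
    then have "kd (f i) \<noteq> KA" using noA_hole[of "f 0" "f 2" "f 4"] noA_hole[of "f 1" "f 3" "f 5"] noA_hole[of "f 2" "f 4" "f 6"] noA_hole[of "f 3" "f 5" "f 0"] noA_hole[of "f 4" "f 6" "f 1"] noA_hole[of "f 5" "f 0" "f 2"] noA_hole[of "f 6" "f 1" "f 3"] by (auto simp: S)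
    then show ?thesis by (cases "kd (f i)") auto
  qed
  have c0: "\<not> (kd (f 0) = KC \<and> kd (f 2) = KC)" by (rule nc_hole) (simp_all add: S)
  have c1: "\<not> (kd (f 0) = KC \<and> kd (f 3) = KC)" by (rule nc_hole) (simp_all add: S)
  have c2: "\<not> (kd (f 0) = KC \<and> kd (f 4) = KC)" by (rule nc_hole) (simp_all add: S)
  have c3: "\<not> (kd (f 0) = KC \<and> kd (f 5) = KC)" by (rule nc_hole) (simp_all add: S)
  have c4: "\<not> (kd (f 1) = KC \<and> kd (f 3) = KC)" by (rule nc_hole) (simp_all add: S)
  have c5: "\<not> (kd (f 1) = KC \<and> kd (f 4) = KC)" by (rule nc_hole) (simp_all add: S)
  have c6: "\<not> (kd (f 1) = KC \<and> kd (f 5) = KC)" by (rule nc_hole) (simp_all add: S)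
  have c7: "\<not> (kd (f 1) = KC \<and> kd (f 6) = KC)" by (rule nc_hole) (simp_all add: S)
  have c8: "\<not> (kd (f 2) = KC \<and> kd (f 4) = KC)" by (rule nc_hole) (simp_all add: S)
  have c9: "\<not> (kd (f 2) = KC \<and> kd (f 5) = KC)" by (rule nc_hole) (simp_all add: S)
  have c10: "\<not> (kd (f 2) = KC \<and> kd (f 6) = KC)" by (rule nc_hole) (simp_all add: S)
  have c11: "\<not> (kd (f 3) = KC \<and> kd (f 5) = KC)" by (rule nc_hole) (simp_all add: S)
  have c12: "\<not> (kd (f 3) = KC \<and> kd (f 6) = KC)" by (rule nc_hole) (simp_all add: S)
  have c13: "\<not> (kd (f 4) = KC \<and> kd (f 6) = KC)" by (rule nc_hole) (simp_all add: S)
  have b0: "\<not> (kd (f 0) = KB \<and> kd (f 1) = KB \<and> kd (f 2) = KB)" by (rule nb_hole) (simp_all add: S)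
  have b1: "\<not> (kd (f 1) = KB \<and> kd (f 2) = KB \<and> kd (f 3) = KB)" by (rule nb_hole) (simp_all add: S)
  have b2: "\<not> (kd (f 2) = KB \<and> kd (f 3) = KB \<and> kd (f 4) = KB)" by (rule nb_hole) (simp_all add: S)
  have b3: "\<not> (kd (f 3) = KB \<and> kd (f 4) = KB \<and> kd (f 5) = KB)" by (rule nb_hole) (simp_all add: S)
  have b4: "\<not> (kd (f 4) = KB \<and> kd (f 5) = KB \<and> kd (f 6) = KB)" by (rule nb_hole) (simp_all add: S)
  have b5: "\<not> (kd (f 5) = KB \<and> kd (f 6) = KB \<and> kd (f 0) = KB)" by (rule nb_hole) (simp_all add: S)
  have b6: "\<not> (kd (f 6) = KB \<and> kd (f 0) = KB \<and> kd (f 1) = KB)" by (rule nb_hole) (simp_all add: S)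
  have k0: "kd (f 0) = KB \<or> kd (f 0) = KC" using nA[of 0] by simp
  have k1: "kd (f 1) = KB \<or> kd (f 1) = KC" using nA[of 1] by simp
  have k2: "kd (f 2) = KB \<or> kd (f 2) = KC" using nA[of 2] by simp
  have k3: "kd (f 3) = KB \<or> kd (f 3) = KC" using nA[of 3] by simp
  have k4: "kd (f 4) = KB \<or> kd (f 4) = KC" using nA[of 4] by simp
  have k5: "kd (f 5) = KB \<or> kd (f 5) = KC" using nA[of 5] by simp
  have k6: "kd (f 6) = KB \<or> kd (f 6) = KC" using nA[of 6] by simp
  show False using k0 k1 k2 k3 k4 k5 k6 c0 c1 c2 c3 c4 c5 c6 c7 c8 c9 c10 c11 c12 c13 b0 b1 b2 b3 b4 b5 b6 by (smt (verit) kind.distinct)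
qed

lemma no2P3: "\<not> has_induced V E twoP3_V twoP3_E"
proof
  assume "has_induced V E twoP3_V twoP3_E"
  then obtain f where inj: "inj_on f {0..<6}" and sub: "f ` {0..<6} \<subseteq> V"
    and iso: "\<forall>x\<in>{0..<6}. \<forall>y\<in>{0..<6}. twoP3_E x y \<longleftrightarrow> E (f x) (f y)"
    unfolding has_induced_def twoP3_V_def by auto
  have ed: "E (f i) (f j) = twoP3_E i j" if "i<6" "j<6" for i j using iso that by auto
  have ne: "(f i = f j) = (i = j)" if "i<6" "j<6" for i j using inj that by (auto simp: inj_on_def)
  have inV: "f i \<in> V" if "i<6" for i using sub that by auto
  note S = ed ne inV twoP3_E_def edges_adj_def
  show False by (rule no2P3core[of "f 0" "f 1" "f 2" "f 3" "f 4" "f 5"]) (simp_all add: S)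
qed

lemma noC4w: "\<not> has_induced V E (cycle_V 4) (cycle_E 4)"
proof
  assume "has_induced V E (cycle_V 4) (cycle_E 4)"
  then obtain f where inj: "inj_on f {0..<4}" and sub: "f ` {0..<4} \<subseteq> V"
    and iso: "\<forall>x\<in>{0..<4}. \<forall>y\<in>{0..<4}. (cycle_E 4) x y \<longleftrightarrow> E (f x) (f y)"
    unfolding has_induced_def cycle_V_def by auto
  have ed: "E (f i) (f j) = (cycle_E 4) i j" if "i<4" "j<4" for i j using iso that by auto
  have ne: "(f i = f j) = (i = j)" if "i<4" "j<4" for i j using inj that by (auto simp: inj_on_def)
  have inV: "f i \<in> V" if "i<4" for i using sub that by auto
  note S = ed ne inV cycle_E_def
  show False by (rule noC4[of "f 0" "f 1" "f 2" "f 3"]) (simp add: S)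
qed

lemma noT0: "\<not> has_induced V E T0_V T0_E"
proof
  assume "has_induced V E T0_V T0_E"
  then obtain f where inj: "inj_on f {0..<9}" and sub: "f ` {0..<9} \<subseteq> V"
    and iso: "\<forall>x\<in>{0..<9}. \<forall>y\<in>{0..<9}. T0_E x y \<longleftrightarrow> E (f x) (f y)"
    unfolding has_induced_def T0_V_def by auto
  have ed: "E (f i) (f j) = T0_E i j" if "i<9" "j<9" for i j using iso that by auto
  have ne: "(f i = f j) = (i = j)" if "i<9" "j<9" for i j using inj that by (auto simp: inj_on_def)
  have inV: "f i \<in> V" if "i<9" for i using sub that by auto
  note S = ed ne inV T0_E_def edges_adj_def
  have P: "ind5 (f 0) (f 4) (f 7) (f 8) (f 5)" by (simp add: S)
  have Q: "ind5 (f 1) (f 4) (f 7) (f 8) (f 5)" by (simp add: S)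
  have R: "ind5 (f 0) (f 2) (f 6) (f 3) (f 1)" by (simp add: S)
  have u: "E (f 4) (f 0)" "E (f 4) (f 1)" "E (f 5) (f 0)" "E (f 5) (f 1)" by (simp_all add: S)
  have iu: "kd (f 4) = KB \<Longrightarrow> kd (f 0) = KC \<Longrightarrow> idx (f 4) = idx (f 0)"
     "kd (f 4) = KB \<Longrightarrow> kd (f 1) = KC \<Longrightarrow> idx (f 4) = idx (f 1)"
     "kd (f 5) = KB \<Longrightarrow> kd (f 0) = KC \<Longrightarrow> idx (f 5) = idx (f 0)"
     "kd (f 5) = KB \<Longrightarrow> kd (f 1) = KC \<Longrightarrow> idx (f 5) = idx (f 1)"
    using BC u inV by simp_all
  show False using C5[OF P] C5[OF Q] C5[OF R] iu by (smt (verit) kind.distinct)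
qed

end



theorem proposition5p3:
  fixes t :: nat and V :: "'a set" and E :: "'a \<Rightarrow> 'a \<Rightarrow> bool"
  assumes "t \<ge> 3" and "villa t V E"
  shows "\<not> has_induced V E twoP3_V twoP3_E \<and>
         \<not> has_induced V E (cycle_V 4) (cycle_E 4) \<and>
         \<not> has_induced V E (cycle_V 6) (cycle_E 6) \<and>
         \<not> has_induced V E (cycle_V 7) (cycle_E 7) \<and>
         \<not> has_induced V E T0_V T0_E \<and>
         has_induced V E (pentagon_V t) pentagon_E \<and>
         anticonnected V E \<and>
         (\<forall>v\<in>V. \<not> simplicial V E v) \<and>
         (\<forall>v\<in>V. \<not> universal V E v)"
proof -
  have t3: "t \<ge> 3" by fact
  have gr: "graph V E" using assms(2) unfolding villa_def by blast
  have symE: "\<And>x y. x\<in>V \<Longrightarrow> y\<in>V \<Longrightarrow> E x y \<Longrightarrow> E y x" using gr unfolding graph_def by blast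
  have irrE: "\<And>x. x\<in>V \<Longrightarrow> \<not> E x x" using gr unfolding graph_def by blast
  obtain A B C where
    Vdef: "V = A \<union> (\<Union>i\<in>{1..t}. B i) \<union> (\<Union>i\<in>{1..t}. C i)" and
    ne: "A \<noteq> {}" "\<forall>i\<in>{1..t}. B i \<noteq> {} \<and> C i \<noteq> {}" and
    dAB: "\<forall>i\<in>{1..t}. A \<inter> B i = {} \<and> A \<inter> C i = {}" and
    dBC: "\<forall>i\<in>{1..t}. \<forall>j\<in>{1..t}. B i \<inter> C j = {}" and
    dBB: "\<forall>i\<in>{1..t}. \<forall>j\<in>{1..t}. i \<noteq> j \<longrightarrow> B i \<inter> B j = {} \<and> C i \<inter> C j = {}" and
    clA: "clique E A" and clBC: "\<forall>i\<in>{1..t}. clique E (B i) \<and> clique E (C i)" and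
    cAB: "\<forall>i\<in>{1..t}. complete_to E A (B i) \<and> anticomplete_to E A (C i)" and
    cij: "\<forall>i\<in>{1..t}. \<forall>j\<in>{1..t}. i \<noteq> j \<longrightarrow>
          anticomplete_to E (B i) (B j) \<and> complete_to E (C i) (C j) \<and>
          anticomplete_to E (B i) (C j)" and
    nest: "\<forall>i\<in>{1..t}. \<exists>bs. distinct bs \<and> set bs = B i \<and>
          neighbours V E (bs ! 0) \<inter> C i = C i \<and>
          neighbours V E (last bs) \<inter> C i \<noteq> {} \<and>
          (\<forall>j k. j \<le> k \<and> k < length bs \<longrightarrow>
              neighbours V E (bs ! k) \<inter> C i \<subseteq> neighbours V E (bs ! j) \<inter> C i)"
    using assms(2) unfolding villa_def by (elim conjE exE) blast
  define kd where "kd x = (if x \<in> A then KA else if (\<exists>i\<in>{1..t}. x \<in> B i) then KB else KC)" for x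
  define idx where "idx x = (SOME i. i\<in>{1..t} \<and> (x \<in> B i \<or> x \<in> C i))" for x
  have idxB: "idx x = i" if "i\<in>{1..t}" "x \<in> B i" for x i
    unfolding idx_def
  proof (rule some_equality)
    show "i\<in>{1..t} \<and> (x \<in> B i \<or> x \<in> C i)" using that by blast
    fix j assume "j\<in>{1..t} \<and> (x \<in> B j \<or> x \<in> C j)"
    then show "j = i" using that dBC dBB by blast
  qed
  have idxC: "idx x = i" if "i\<in>{1..t}" "x \<in> C i" for x i
    unfolding idx_def
  proof (rule some_equality)
    show "i\<in>{1..t} \<and> (x \<in> B i \<or> x \<in> C i)" using that by blast
    fix j assume "j\<in>{1..t} \<and> (x \<in> B j \<or> x \<in> C j)"
    then show "j = i" using that dBC dBB by blast
  qed
  have kA: "x \<in> V \<and> kd x = KA" if "x \<in> A" for x using that Vdef kd_def by auto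
  have kB: "x \<in> V \<and> kd x = KB \<and> idx x = i" if "i\<in>{1..t}" "x \<in> B i" for x i
    using that Vdef kd_def idxB dAB by auto
  have kC: "x \<in> V \<and> kd x = KC \<and> idx x = i" if "i\<in>{1..t}" "x \<in> C i" for x i
  proof -
    have "x \<notin> A" "\<not>(\<exists>i\<in>{1..t}. x \<in> B i)" using that dAB dBC by blast+
    then show ?thesis using that Vdef idxC[OF that] unfolding kd_def by auto
  qed
  have kinv: "(kd x = KA \<longrightarrow> x\<in>A) \<and> (kd x = KB \<longrightarrow> idx x \<in>{1..t} \<and> x \<in> B (idx x)) \<and>
      (kd x = KC \<longrightarrow> idx x \<in>{1..t} \<and> x \<in> C (idx x))" if xV: "x \<in> V" for x
  proof -
    consider "x \<in> A" | i where "i\<in>{1..t}" "x \<in> B i" | i where "i\<in>{1..t}" "x \<in> C i"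
      using xV Vdef by blast
    then show ?thesis
    proof cases
      case 1 then show ?thesis using kA by simp
    next
      case 2 then show ?thesis using kB[OF 2] by simp
    next
      case 3 then show ?thesis using kC[OF 3] by simp
    qed
  qed
  have ax_AA: "\<And>x y. x\<in>V \<Longrightarrow> y\<in>V \<Longrightarrow> x\<noteq>y \<Longrightarrow> kd x = KA \<Longrightarrow> kd y = KA \<Longrightarrow> E x y"
    using kinv clA unfolding clique_def by blast
  have ax_AB: "\<And>x y. x\<in>V \<Longrightarrow> y\<in>V \<Longrightarrow> kd x = KA \<Longrightarrow> kd y = KB \<Longrightarrow> E x y"
    using kinv cAB unfolding complete_to_def by blast
  have ax_AC: "\<And>x y. x\<in>V \<Longrightarrow> y\<in>V \<Longrightarrow> kd x = KA \<Longrightarrow> kd y = KC \<Longrightarrow> \<not> E x y"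
    using kinv cAB unfolding anticomplete_to_def by blast
  have ax_BB: "\<And>x y. x\<in>V \<Longrightarrow> y\<in>V \<Longrightarrow> x\<noteq>y \<Longrightarrow> kd x = KB \<Longrightarrow> kd y = KB \<Longrightarrow> E x y \<longleftrightarrow> idx x = idx y"
  proof -
    fix x y assume h: "x\<in>V" "y\<in>V" "x\<noteq>y" "kd x = KB" "kd y = KB"
    then have "idx x \<in>{1..t}" "x \<in> B (idx x)" "idx y \<in>{1..t}" "y \<in> B (idx y)" using kinv by blast+
    then show "E x y \<longleftrightarrow> idx x = idx y" using h clBC cij unfolding clique_def anticomplete_to_def by metis
  qed
  have ax_CC: "\<And>x y. x\<in>V \<Longrightarrow> y\<in>V \<Longrightarrow> x\<noteq>y \<Longrightarrow> kd x = KC \<Longrightarrow> kd y = KC \<Longrightarrow> E x y"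
  proof -
    fix x y assume h: "x\<in>V" "y\<in>V" "x\<noteq>y" "kd x = KC" "kd y = KC"
    then have "idx x \<in>{1..t}" "x \<in> C (idx x)" "idx y \<in>{1..t}" "y \<in> C (idx y)" using kinv by blast+
    then show "E x y" using h clBC cij unfolding clique_def complete_to_def by metis
  qed
  have ax_BC: "\<And>x y. x\<in>V \<Longrightarrow> y\<in>V \<Longrightarrow> kd x = KB \<Longrightarrow> kd y = KC \<Longrightarrow> E x y \<Longrightarrow> idx x = idx y"
  proof -
    fix x y assume h: "x\<in>V" "y\<in>V" "kd x = KB" "kd y = KC" "E x y"
    then have "idx x \<in>{1..t}" "x \<in> B (idx x)" "idx y \<in>{1..t}" "y \<in> C (idx y)" using kinv by blast+
    then show "idx x = idx y" using h cij unfolding anticomplete_to_def by metis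
  qed
  have ax_K2: "\<And>b b' c c'. b\<in>V \<Longrightarrow> b'\<in>V \<Longrightarrow> c\<in>V \<Longrightarrow> c'\<in>V \<Longrightarrow> kd b = KB \<Longrightarrow> kd b' = KB \<Longrightarrow>
     kd c = KC \<Longrightarrow> kd c' = KC \<Longrightarrow> idx b = idx c \<Longrightarrow> idx b' = idx c \<Longrightarrow> idx c' = idx c \<Longrightarrow>
     E b c \<Longrightarrow> E b' c' \<Longrightarrow> \<not> E b c' \<Longrightarrow> \<not> E b' c \<Longrightarrow> False"
  proof -
    fix b b' c c' assume h: "b\<in>V" "b'\<in>V" "c\<in>V" "c'\<in>V" "kd b = KB" "kd b' = KB"
     "kd c = KC" "kd c' = KC" "idx b = idx c" "idx b' = idx c" "idx c' = idx c"
     "E b c" "E b' c'" "\<not> E b c'" "\<not> E b' c"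
    define i where "i = idx c"
    have m: "i \<in> {1..t}" "b \<in> B i" "b' \<in> B i" "c \<in> C i" "c' \<in> C i" using kinv h i_def by metis+
    obtain bs where bs: "set bs = B i" "\<forall>j k. j \<le> k \<and> k < length bs \<longrightarrow>
              neighbours V E (bs ! k) \<inter> C i \<subseteq> neighbours V E (bs ! j) \<inter> C i"
      using nest m(1) by blast
    obtain j where j: "j < length bs" "bs ! j = b" using bs(1) m(2) by (metis in_set_conv_nth)
    obtain k where k: "k < length bs" "bs ! k = b'" using bs(1) m(3) by (metis in_set_conv_nth)
    show False
    proof (cases "j \<le> k")
      case True
      then have "neighbours V E b' \<inter> C i \<subseteq> neighbours V E b \<inter> C i" using bs(2) j k by metis
      then show False using h m unfolding neighbours_def by blast
    next
      case False
      then have "neighbours V E b \<inter> C i \<subseteq> neighbours V E b' \<inter> C i" using bs(2) j k by (metis nat_le_linear)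
      then show False using h m unfolding neighbours_def by blast
    qed
  qed
  interpret vs V E kd idx
    by (rule vs.intro[OF symE irrE ax_AA ax_AB ax_AC ax_BB ax_CC ax_BC ax_K2])
  have part1: "\<not> has_induced V E twoP3_V twoP3_E \<and>
         \<not> has_induced V E (cycle_V 4) (cycle_E 4) \<and>
         \<not> has_induced V E (cycle_V 6) (cycle_E 6) \<and>
         \<not> has_induced V E (cycle_V 7) (cycle_E 7) \<and>
         \<not> has_induced V E T0_V T0_E"
    using no2P3 noC4w noC6 noC7 noT0 by blast
  define oth where "oth (i::nat) = (if i = 1 then 2 else (1::nat))" for i
  have oth: "oth i \<in> {1..t}" "oth i \<noteq> i" for i using t3 oth_def by auto
  obtain a0 where a0: "a0 \<in> A" using ne by blast
  have a0k: "a0 \<in> V" "kd a0 = KA" using kA a0 by blast+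
  have exB: "\<exists>x. x \<in> V \<and> kd x = KB \<and> idx x = i" if "i\<in>{1..t}" for i
    using ne that kB by blast
  have exC: "\<exists>x. x \<in> V \<and> kd x = KC \<and> idx x = i" if "i\<in>{1..t}" for i
    using ne that kC by blast
  define bs where "bs i = (SOME bs. distinct bs \<and> set bs = B i \<and>
          neighbours V E (bs ! 0) \<inter> C i = C i \<and>
          neighbours V E (last bs) \<inter> C i \<noteq> {} \<and>
          (\<forall>j k. j \<le> k \<and> k < length bs \<longrightarrow>
              neighbours V E (bs ! k) \<inter> C i \<subseteq> neighbours V E (bs ! j) \<inter> C i))" for i
  have bs: "distinct (bs i) \<and> set (bs i) = B i \<and>
          neighbours V E (bs i ! 0) \<inter> C i = C i \<and>
          neighbours V E (last (bs i)) \<inter> C i \<noteq> {} \<and>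
          (\<forall>j k. j \<le> k \<and> k < length (bs i) \<longrightarrow>
              neighbours V E (bs i ! k) \<inter> C i \<subseteq> neighbours V E (bs i ! j) \<inter> C i)" if "i\<in>{1..t}" for i
    unfolding bs_def using someI_ex[OF nest[rule_format, OF that]] .
  have b0: "bs i ! 0 \<in> B i" "\<And>c. c \<in> C i \<Longrightarrow> E (bs i ! 0) c" if "i\<in>{1..t}" for i
  proof -
    have "bs i \<noteq> []" using bs[OF that] ne(2) that by (metis empty_set)
    then show "bs i ! 0 \<in> B i" using bs[OF that] by (metis length_greater_0_conv nth_mem)
    show "\<And>c. c \<in> C i \<Longrightarrow> E (bs i ! 0) c" using bs[OF that] unfolding neighbours_def by blast
  qed
  have bnb: "\<exists>c. c \<in> C i \<and> E b c" if iT: "i\<in>{1..t}" and bB: "b \<in> B i" for i b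
  proof -
    obtain k where k: "k < length (bs i)" "bs i ! k = b" using bs[OF iT] bB by (metis in_set_conv_nth)
    have ne0: "bs i \<noteq> []" using k by auto
    have L: "last (bs i) = bs i ! (length (bs i) - 1)" using ne0 by (rule last_conv_nth)
    have "k \<le> length (bs i) - 1" "length (bs i) - 1 < length (bs i)" using k by auto
    then have "neighbours V E (bs i ! (length (bs i) - 1)) \<inter> C i \<subseteq> neighbours V E (bs i ! k) \<inter> C i"
      using bs[OF iT] by blast
    then have "neighbours V E (last (bs i)) \<inter> C i \<subseteq> neighbours V E b \<inter> C i"
      using L k by simp
    then show ?thesis using bs[OF iT] unfolding neighbours_def by blast
  qed
  have one: "(1::nat) \<in> {1..t}" and two: "(2::nat) \<in> {1..t}" using t3 by auto
  have symN: "\<And>x y. x\<in>V \<Longrightarrow> y\<in>V \<Longrightarrow> \<not> E x y \<Longrightarrow> \<not> E y x" using symE by blast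
  define bb where "bb i = bs i ! 0" for i
  define cc where "cc i = (SOME c. c \<in> C i)" for i
  have bbk: "bb i \<in> V \<and> kd (bb i) = KB \<and> idx (bb i) = i" if "i\<in>{1..t}" for i
    using kB[OF that b0(1)[OF that]] bb_def by simp
  have cin: "cc i \<in> C i" if "i\<in>{1..t}" for i
    using ne(2) that unfolding cc_def by (metis ex_in_conv someI_ex)
  have cck: "cc i \<in> V \<and> kd (cc i) = KC \<and> idx (cc i) = i" if "i\<in>{1..t}" for i
    using kC[OF that cin[OF that]] .
  have bc: "E (bb i) (cc i)" if "i\<in>{1..t}" for i
    using b0(2)[OF that cin[OF that]] bb_def by simp
  define f where "f v = (case v of PA \<Rightarrow> a0 | PB i \<Rightarrow> bb i | PC i \<Rightarrow> cc i)" for v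
  have fPA: "f PA = a0" and fPB: "f (PB i) = bb i" and fPC: "f (PC i) = cc i" for i
    unfolding f_def by simp_all
  have pent: "has_induced V E (pentagon_V t) pentagon_E"
    unfolding has_induced_def
  proof (intro exI conjI)
    show "inj_on f (pentagon_V t)"
    proof (rule inj_onI)
      fix x y assume x: "x \<in> pentagon_V t" and y: "y \<in> pentagon_V t" and fxy: "f x = f y"
      have kx: "kd (f x) = (case x of PA \<Rightarrow> KA | PB _ \<Rightarrow> KB | PC _ \<Rightarrow> KC) \<and>
           idx (f x) = (case x of PA \<Rightarrow> idx a0 | PB i \<Rightarrow> i | PC i \<Rightarrow> i)"
        using x a0k bbk cck unfolding pentagon_V_def by (auto simp: fPA fPB fPC)
      have ky: "kd (f y) = (case y of PA \<Rightarrow> KA | PB _ \<Rightarrow> KB | PC _ \<Rightarrow> KC) \<and>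
           idx (f y) = (case y of PA \<Rightarrow> idx a0 | PB i \<Rightarrow> i | PC i \<Rightarrow> i)"
        using y a0k bbk cck unfolding pentagon_V_def by (auto simp: fPA fPB fPC)
      have e1: "kd (f x) = kd (f y)" and e2: "idx (f x) = idx (f y)" using fxy by simp_all
      have "(case x of PA \<Rightarrow> KA | PB _ \<Rightarrow> KB | PC _ \<Rightarrow> KC) = (case y of PA \<Rightarrow> KA | PB _ \<Rightarrow> KB | PC _ \<Rightarrow> KC)"
        "(case x of PA \<Rightarrow> idx a0 | PB i \<Rightarrow> i | PC i \<Rightarrow> i) = (case y of PA \<Rightarrow> idx a0 | PB i \<Rightarrow> i | PC i \<Rightarrow> i)"
        using kx ky e1 e2 by metis+
      then show "x = y" by (cases x; cases y) simp_all
    qed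
    show "f ` pentagon_V t \<subseteq> V" using a0k bbk cck unfolding pentagon_V_def by (auto simp: fPA fPB fPC)
    show "\<forall>x\<in>pentagon_V t. \<forall>y\<in>pentagon_V t. pentagon_E x y = E (f x) (f y)"
    proof (intro ballI)
      fix x y assume x: "x \<in> pentagon_V t" and y: "y \<in> pentagon_V t"
      show "pentagon_E x y = E (f x) (f y)"
      proof (cases x)
        case PA
        then show ?thesis
        proof (cases y)
          case PA then show ?thesis using \<open>x = PA\<close> fPA irr a0k by simp
        next
          case (PB j) then show ?thesis using \<open>x = PA\<close> fPA fPB AB a0k bbk y unfolding pentagon_V_def by auto
        next
          case (PC j) then show ?thesis using \<open>x = PA\<close> fPA fPC AC a0k cck y unfolding pentagon_V_def by auto
        qed
      next
        case (PB i)
        then have i: "i \<in> {1..t}" using x unfolding pentagon_V_def by auto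
        show ?thesis
        proof (cases y)
          case PA then show ?thesis using \<open>x = PB i\<close> fPA fPB AB sym a0k bbk i by auto
        next
          case (PB j)
          then have j: "j \<in> {1..t}" using y unfolding pentagon_V_def by auto
          show ?thesis
          proof (cases "i = j")
            case True then show ?thesis using \<open>x = PB i\<close> \<open>y = PB j\<close> fPB irr bbk i by simp
          next
            case False
            then have "bb i \<noteq> bb j" using bbk i j by metis
            then show ?thesis using False \<open>x = PB i\<close> \<open>y = PB j\<close> fPB BB[of "bb i" "bb j"] bbk i j by simp
          qed
        next
          case (PC j)
          then have j: "j \<in> {1..t}" using y unfolding pentagon_V_def by auto
          show ?thesis
          proof (cases "i = j")
            case True then show ?thesis using \<open>x = PB i\<close> \<open>y = PC j\<close> fPB fPC bc i by simp
          next
            case False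
            then show ?thesis using \<open>x = PB i\<close> \<open>y = PC j\<close> fPB fPC BC[of "bb i" "cc j"] bbk cck i j by auto
          qed
        qed
      next
        case (PC i)
        then have i: "i \<in> {1..t}" using x unfolding pentagon_V_def by auto
        show ?thesis
        proof (cases y)
          case PA then show ?thesis using \<open>x = PC i\<close> fPA fPC AC symN a0k cck i by auto
        next
          case (PC j)
          then have j: "j \<in> {1..t}" using y unfolding pentagon_V_def by auto
          show ?thesis
          proof (cases "i = j")
            case True then show ?thesis using \<open>x = PC i\<close> \<open>y = PC j\<close> fPC irr cck i by simp
          next
            case False
            then have "cc i \<noteq> cc j" using cck i j by metis
            then show ?thesis using False \<open>x = PC i\<close> \<open>y = PC j\<close> fPC CC[of "cc i" "cc j"] cck i j by simp
          qed
        next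
          case (PB j)
          then have j: "j \<in> {1..t}" using y unfolding pentagon_V_def by auto
          show ?thesis
          proof (cases "i = j")
            case True
            have "E (cc i) (bb i)" using sym[OF _ _ bc[OF i]] bbk[OF i] cck[OF i] by blast
            then show ?thesis using True \<open>x = PC i\<close> \<open>y = PB j\<close> fPB fPC by simp
          next
            case False
            have "\<not> E (bb j) (cc i)" using BC[of "bb j" "cc i"] bbk[OF j] cck[OF i] False by metis
            then have "\<not> E (cc i) (bb j)" using symN bbk[OF j] cck[OF i] by blast
            then show ?thesis using False \<open>x = PC i\<close> \<open>y = PB j\<close> fPB fPC by simp
          qed
        qed
      qed
    qed
  qed
  define R where "R = (\<lambda>u v. u \<in> V \<and> v \<in> V \<and> complement E u v)"
  have Ri: "R u v \<and> R v u" if "u\<in>V" "v\<in>V" "u \<noteq> v" "\<not> E u v" for u v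
    using that symN unfolding R_def complement_def by auto
  have toa: "R\<^sup>*\<^sup>* x a0 \<and> R\<^sup>*\<^sup>* a0 x" if xV: "x \<in> V" for x
  proof (cases "kd x")
    case KA
    show ?thesis
    proof (cases "x = a0")
      case True then show ?thesis by simp
    next
      case False
      obtain c where c: "c \<in> V" "kd c = KC" "idx c = 1" using exC[OF one] by blast
      have "x \<noteq> c" "a0 \<noteq> c" using c KA a0k by auto
      then have "R x c \<and> R c x" "R c a0 \<and> R a0 c" using Ri[of x c] Ri[of a0 c] c xV KA AC a0k by auto
      then show ?thesis by (meson converse_rtranclp_into_rtranclp r_into_rtranclp)
    qed
  next
    case KC
    have "a0 \<noteq> x" using KC a0k by auto
    then have "R x a0 \<and> R a0 x" using Ri[of a0 x] xV KC a0k AC by auto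
    then show ?thesis by auto
  next
    case KB
    obtain c where c: "c \<in> V" "kd c = KC" "idx c = oth (idx x)" using exC[OF oth(1)] by blast
    have "\<not> E x c" using BC[of x c] c xV KB oth(2) by metis
    moreover have "x \<noteq> c" "a0 \<noteq> c" using c KB a0k by auto
    ultimately have "R x c \<and> R c x" "R c a0 \<and> R a0 c" using Ri[of x c] Ri[of a0 c] c xV a0k AC by auto
    then show ?thesis by (meson converse_rtranclp_into_rtranclp r_into_rtranclp)
  qed
  have anti: "anticonnected V E"
    unfolding anticonnected_def graph_connected_def
  proof (intro ballI)
    fix x y assume "x \<in> V" "y \<in> V"
    then have "R\<^sup>*\<^sup>* x y" using toa by (meson rtranclp_trans)
    then show "(\<lambda>u v. u \<in> V \<and> v \<in> V \<and> complement E u v)\<^sup>*\<^sup>* x y" unfolding R_def .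
  qed
  have nsimp: "\<not> simplicial V E v" if vV: "v \<in> V" for v
    unfolding simplicial_def clique_def neighbours_def
  proof (cases "kd v")
    case KA
    obtain b1 where b1: "b1 \<in> V" "kd b1 = KB" "idx b1 = 1" using exB[OF one] by blast
    obtain b2 where b2: "b2 \<in> V" "kd b2 = KB" "idx b2 = 2" using exB[OF two] by blast
    have "b1 \<noteq> b2" using b1 b2 by auto
    then have "\<not> E b1 b2" using BB[of b1 b2] b1 b2 by simp
    then show "\<not> (\<forall>x\<in>{u \<in> V. E v u}. \<forall>y\<in>{u \<in> V. E v u}. x \<noteq> y \<longrightarrow> E x y)"
      using AB[of v b1] AB[of v b2] KA vV b1 b2 \<open>b1 \<noteq> b2\<close> by blast
  next
    case KB
    have i: "idx v \<in> {1..t}" "v \<in> B (idx v)" using kinv vV KB by blast+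
    obtain c where c: "c \<in> C (idx v)" "E v c" using bnb[OF i] by blast
    have ck: "c \<in> V" "kd c = KC" using kC[OF i(1) c(1)] by auto
    have "E v a0" using AB[of a0 v] a0k vV KB sym by blast
    moreover have "a0 \<noteq> c" "\<not> E a0 c" using a0k ck AC by auto
    ultimately show "\<not> (\<forall>x\<in>{u \<in> V. E v u}. \<forall>y\<in>{u \<in> V. E v u}. x \<noteq> y \<longrightarrow> E x y)"
      using c ck a0k by blast
  next
    case KC
    have i: "idx v \<in> {1..t}" "v \<in> C (idx v)" using kinv vV KC by blast+
    have "E (bb (idx v)) v" using b0(2)[OF i] bb_def by simp
    then have e1: "E v (bb (idx v))" using sym bbk[OF i(1)] vV by blast
    obtain c where c: "c \<in> V" "kd c = KC" "idx c = oth (idx v)" using exC[OF oth(1)] by blast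
    have "v \<noteq> c" using c oth(2) by metis
    then have e2: "E v c" using CC[of v c] c vV KC by simp
    have "\<not> E (bb (idx v)) c" using BC[of "bb (idx v)" c] bbk[OF i(1)] c oth(2) by metis
    moreover have "bb (idx v) \<noteq> c" using bbk[OF i(1)] c by auto
    ultimately show "\<not> (\<forall>x\<in>{u \<in> V. E v u}. \<forall>y\<in>{u \<in> V. E v u}. x \<noteq> y \<longrightarrow> E x y)"
      using e1 e2 c bbk[OF i(1)] by blast
  qed
  have nuniv: "\<not> universal V E v" if vV: "v \<in> V" for v
    unfolding universal_def
  proof (cases "kd v")
    case KA
    obtain c where c: "c \<in> V" "kd c = KC" "idx c = 1" using exC[OF one] by blast
    moreover have "c \<noteq> v" using c KA by auto
    ultimately show "\<not> (\<forall>u\<in>V. u \<noteq> v \<longrightarrow> E v u)" using AC[of v c] vV KA by blast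
  next
    case KB
    obtain b where b: "b \<in> V" "kd b = KB" "idx b = oth (idx v)" using exB[OF oth(1)] by blast
    have "b \<noteq> v" using b oth(2) by metis
    moreover have "\<not> E v b" using BB[of v b] b vV KB oth(2)[of "idx v"] \<open>b \<noteq> v\<close> by metis
    ultimately show "\<not> (\<forall>u\<in>V. u \<noteq> v \<longrightarrow> E v u)" using b by blast
  next
    case KC
    have "\<not> E a0 v" using AC[of a0 v] a0k vV KC by blast
    then have "\<not> E v a0" using symN a0k vV by blast
    moreover have "a0 \<noteq> v" using a0k KC by auto
    ultimately show "\<not> (\<forall>u\<in>V. u \<noteq> v \<longrightarrow> E v u)" using a0k by blast
  qed
  show ?thesis using part1 pent anti nsimp nuniv by blast
qed
end
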